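(* Let $M$ be a loopless binary matroid of rank $r$ on ground set $S$. Every rainbow circuit-free coloring of $M$ with exactly $r$ colors is standard. In particular, one of the color classes consists of pairwise parallel elements of $M$.
   Context: A coloring of $S$ is a partition of $S$ into nonempty color classes; it is rainbow circuit-free if no circuit of $M$ has all its elements of pairwise different colors. A coloring of a rank-$r$ matroid $M$ with color classes $S_1,\dots,S_r$ is standard if, after possibly reindexing the classes, $S_i$ is a cut of the restriction $M|(S_1\cup\dots\cup S_i)$ for every $i=1,\dots,r$. A cut of a matroid is an inclusionwise minimal subset of the ground set intersecting every basis. Two non-loop elements $e,f$ are parallel if $r_M(\{e,f\})=1$. A matroid is binary if it is representable over $GF(2)$. *)

theory Defs
  imports Main "HOL-Library.Disjoint_Sets" "HOL-Library.Z2"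
begin

definition matroid :: "'a set \<Rightarrow> ('a set \<Rightarrow> bool) \<Rightarrow> bool" where
  "matroid S indep \<longleftrightarrow> finite S \<and> indep {} \<and> (\<forall>X. indep X \<longrightarrow> X \<subseteq> S)
     \<and> (\<forall>X Y. indep X \<and> Y \<subseteq> X \<longrightarrow> indep Y)
     \<and> (\<forall>X Y. indep X \<and> indep Y \<and> card X < card Y \<longrightarrow> (\<exists>e\<in>Y - X. indep (insert e X)))"

definition mrank :: "('a set \<Rightarrow> bool) \<Rightarrow> 'a set \<Rightarrow> nat" where
  "mrank indep X = Max {card Y | Y. Y \<subseteq> X \<and> indep Y}"

definition circuit :: "'a set \<Rightarrow> ('a set \<Rightarrow> bool) \<Rightarrow> 'a set \<Rightarrow> bool" where
  "circuit S indep C \<longleftrightarrow> C \<subseteq> S \<and> \<not> indep C \<and> (\<forall>D. D \<subset> C \<longrightarrow> indep D)"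

definition loopless :: "'a set \<Rightarrow> ('a set \<Rightarrow> bool) \<Rightarrow> bool" where
  "loopless S indep \<longleftrightarrow> (\<forall>e\<in>S. \<not> circuit S indep {e})"

text \<open>Binary: representable over GF(2), i.e. there are vectors v e over GF(2) such that
  X is independent iff the family (v e)_{e \<in> X} is linearly independent over GF(2)
  (over GF(2) a nontrivial linear relation is a nonempty subfamily summing to zero).\<close>
definition binary :: "'a set \<Rightarrow> ('a set \<Rightarrow> bool) \<Rightarrow> bool" where
  "binary S indep \<longleftrightarrow> (\<exists>v :: 'a \<Rightarrow> nat \<Rightarrow> bit. \<forall>X \<subseteq> S.
      indep X \<longleftrightarrow> \<not> (\<exists>Y \<subseteq> X. Y \<noteq> {} \<and> (\<forall>k. (\<Sum>y\<in>Y. v y k) = 0)))"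

definition basis_of :: "('a set \<Rightarrow> bool) \<Rightarrow> 'a set \<Rightarrow> 'a set \<Rightarrow> bool" where
  "basis_of indep T B \<longleftrightarrow> B \<subseteq> T \<and> indep B \<and>
     (\<forall>B'. B \<subseteq> B' \<and> B' \<subseteq> T \<and> indep B' \<longrightarrow> B' = B)"

definition is_cut :: "('a set \<Rightarrow> bool) \<Rightarrow> 'a set \<Rightarrow> 'a set \<Rightarrow> bool" where
  "is_cut indep T D \<longleftrightarrow> D \<subseteq> T \<and> (\<forall>B. basis_of indep T B \<longrightarrow> D \<inter> B \<noteq> {}) \<and>
     (\<forall>D'. D' \<subset> D \<longrightarrow> (\<exists>B. basis_of indep T B \<and> D' \<inter> B = {}))"

definition parallel :: "('a set \<Rightarrow> bool) \<Rightarrow> 'a \<Rightarrow> 'a \<Rightarrow> bool" where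
  "parallel indep e f \<longleftrightarrow> indep {e} \<and> indep {f} \<and> mrank indep {e, f} = 1"

text \<open>A coloring is a partition P of S into nonempty classes (partition_on).\<close>
definition rainbow_circuit_free :: "'a set \<Rightarrow> ('a set \<Rightarrow> bool) \<Rightarrow> 'a set set \<Rightarrow> bool" where
  "rainbow_circuit_free S indep P \<longleftrightarrow>
     \<not> (\<exists>C. circuit S indep C \<and> (\<forall>A\<in>P. card (C \<inter> A) \<le> 1))"

definition standard_coloring :: "('a set \<Rightarrow> bool) \<Rightarrow> nat \<Rightarrow> 'a set set \<Rightarrow> bool" where
  "standard_coloring indep r P \<longleftrightarrow> (\<exists>Sc :: nat \<Rightarrow> 'a set. bij_betw Sc {1..r} P \<and>
     (\<forall>i\<in>{1..r}. is_cut indep (\<Union>j\<in>{1..i}. Sc j) (Sc i)))"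

end

theory Submission
  imports Defs
begin


definition xsum :: "'i set \<Rightarrow> ('i \<Rightarrow> 'j set) \<Rightarrow> 'j set" where
  "xsum J \<rho> = {x. odd (card {i\<in>J. x \<in> \<rho> i})}"

definition arc :: "('i \<Rightarrow> 'i set set) \<Rightarrow> 'i \<Rightarrow> 'i \<Rightarrow> bool" where
  "arc R i j \<longleftrightarrow> i \<noteq> j \<and> (\<exists>r\<in>R i. j \<in> r)"

lemma pred_surj:
  assumes fin: "finite C" and C: "C \<noteq> {}"
  and min: "\<forall>C'. C' \<subseteq> C \<longrightarrow> C' \<noteq> {} \<longrightarrow> (\<forall>j\<in>C'. \<exists>i\<in>C'. arc R i j) \<longrightarrow> card C \<le> card C'"
  and q: "\<forall>j\<in>C. q j \<in> C \<and> arc R (q j) j"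
  shows "q ` C = C"
proof (rule ccontr)
  assume ne1: "q ` C \<noteq> C"
  have "q ` C \<subseteq> C" using q by auto
  then obtain u where u: "u \<in> C" "u \<notin> q ` C" using ne1 by blast
  let ?C' = "C - {u}"
  have ne: "?C' \<noteq> {}"
  proof
    assume "?C' = {}" then have "C = {u}" using u by auto
    then have "q u \<in> {u}" using q u by auto
    then have "q u = u" by simp
    moreover have "arc R (q u) u" using q u by auto
    ultimately show False unfolding arc_def by auto
  qed
  have "\<forall>j\<in>?C'. \<exists>i\<in>?C'. arc R i j"
  proof
    fix j assume j: "j \<in> ?C'"
    then have "q j \<in> C" "q j \<noteq> u" using q u by auto
    then have "q j \<in> ?C'" by auto
    moreover have "arc R (q j) j" using q j by auto
    ultimately show "\<exists>i\<in>?C'. arc R i j" by blast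
  qed
  moreover have "?C' \<subseteq> C" by auto
  ultimately have "card C \<le> card ?C'" using min ne by blast
  moreover have "card ?C' < card C" by (rule card_Diff1_less[OF fin u(1)])
  ultimately show False by simp
qed

lemma key_abstract:
  fixes I :: "'i set" and R :: "'i \<Rightarrow> 'i set set"
  assumes finI: "finite I" and neI: "I \<noteq> {}"
  and a: "\<forall>i\<in>I. \<forall>r\<in>R i. r \<subseteq> I \<and> i \<in> r"
  and b: "\<forall>J \<rho>. J \<subseteq> I \<longrightarrow> J \<noteq> {} \<longrightarrow> (\<forall>i\<in>J. \<rho> i \<in> R i) \<longrightarrow> \<not> xsum J \<rho> \<subseteq> I - J"
  and c: "\<forall>j\<in>I. \<exists>i\<in>I. arc R i j"
  shows False
proof -
  let ?P = "\<lambda>C. C \<subseteq> I \<and> C \<noteq> {} \<and> (\<forall>j\<in>C. \<exists>i\<in>C. arc R i j)"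
  have "?P I" using neI c by blast
  then obtain C where PC: "?P C" and minC: "\<forall>C'. ?P C' \<longrightarrow> card C \<le> card C'"
    using ex_has_least_nat[of ?P I card] by blast
  have finC: "finite C" using PC finI finite_subset by blast
  have min': "\<forall>C'. C' \<subseteq> C \<longrightarrow> C' \<noteq> {} \<longrightarrow> (\<forall>j\<in>C'. \<exists>i\<in>C'. arc R i j) \<longrightarrow> card C \<le> card C'"
  proof (intro allI impI)
    fix C' assume h: "C' \<subseteq> C" "C' \<noteq> {}" "\<forall>j\<in>C'. \<exists>i\<in>C'. arc R i j"
    then have "?P C'" using PC by auto
    then show "card C \<le> card C'" using minC by blast
  qed
  have "\<forall>j\<in>C. \<exists>i. i \<in> C \<and> arc R i j" using PC by blast
  then obtain p where p: "\<forall>j\<in>C. p j \<in> C \<and> arc R (p j) j"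
    using bchoice[of C "\<lambda>j i. i \<in> C \<and> arc R i j"] by blast
  have surj: "p ` C = C" by (rule pred_surj[OF finC _ min' p]) (use PC in auto)
  have inj: "inj_on p C" by (rule eq_card_imp_inj_on[OF finC]) (simp add: surj)
  have uniq: "i = p x" if i: "i \<in> C" and x: "x \<in> C" and ix: "arc R i x" for i x
  proof (rule ccontr)
    assume ne: "i \<noteq> p x"
    let ?q = "p(x := i)"
    have q: "\<forall>j\<in>C. ?q j \<in> C \<and> arc R (?q j) j" using p i x ix by auto
    have "?q ` C = C" by (rule pred_surj[OF finC _ min' q]) (use PC in auto)
    then have "p x \<in> ?q ` C" using p x by auto
    then obtain j where j: "j \<in> C" "?q j = p x" by auto
    show False
    proof (cases "j = x")
      case True
      then have "i = p x" using j(2) by simp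
      then show ?thesis using ne by simp
    next
      case False then have "p j = p x" using j by auto
      then have "j = x" using inj j x by (auto dest: inj_onD)
      then show ?thesis using False by auto
    qed
  qed
  have "\<forall>i\<in>C. \<exists>r. r \<in> R i \<and> (\<exists>x\<in>C. p x = i \<and> x \<in> r)"
  proof
    fix i assume i: "i \<in> C"
    then obtain x where x: "x \<in> C" "p x = i" using surj by force
    then have "arc R i x" using p by auto
    then obtain r where "r \<in> R i" "x \<in> r" unfolding arc_def by auto
    then show "\<exists>r. r \<in> R i \<and> (\<exists>x\<in>C. p x = i \<and> x \<in> r)" using x by auto
  qed
  then obtain \<rho> where \<rho>: "\<forall>i\<in>C. \<rho> i \<in> R i \<and> (\<exists>x\<in>C. p x = i \<and> x \<in> \<rho> i)"
    using bchoice[of C "\<lambda>i r. r \<in> R i \<and> (\<exists>x\<in>C. p x = i \<and> x \<in> r)"] by blast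
  have cnt: "{i\<in>C. y \<in> \<rho> i} = {y, p y}" if y: "y \<in> C" for y
  proof
    show "{i\<in>C. y \<in> \<rho> i} \<subseteq> {y, p y}"
    proof
      fix i assume "i \<in> {i\<in>C. y \<in> \<rho> i}"
      then have i: "i \<in> C" "y \<in> \<rho> i" by auto
      show "i \<in> {y, p y}"
      proof (cases "i = y")
        case False
        then have "arc R i y" using i \<rho> unfolding arc_def by blast
        then show ?thesis using uniq i y by auto
      qed simp
    qed
    have y1: "y \<in> \<rho> y" using a \<rho> y PC by blast
    have py: "p y \<in> C" using p y by blast
    obtain x where x: "x \<in> C" "p x = p y" "x \<in> \<rho> (p y)" using \<rho> py by blast
    have "x = y" using inj x(1,2) y by (auto dest: inj_onD)
    then have y2: "y \<in> \<rho> (p y)" using x(3) by simp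
    show "{y, p y} \<subseteq> {i\<in>C. y \<in> \<rho> i}" using y1 y2 y py by blast
  qed
  have "xsum C \<rho> \<subseteq> I - C"
  proof
    fix x assume x: "x \<in> xsum C \<rho>"
    then have o: "odd (card {i\<in>C. x \<in> \<rho> i})" unfolding xsum_def by auto
    then have "{i\<in>C. x \<in> \<rho> i} \<noteq> {}" by (intro notI) simp
    then obtain i where "i \<in> C" "x \<in> \<rho> i" by auto
    then have "x \<in> I" using a \<rho> PC by blast
    moreover have "x \<notin> C"
    proof
      assume "x \<in> C"
      then have "card {i\<in>C. x \<in> \<rho> i} = 2" using cnt p unfolding arc_def by auto
      then show False using o by simp
    qed
    ultimately show "x \<in> I - C" by auto
  qed
  moreover have "\<forall>i\<in>C. \<rho> i \<in> R i" using \<rho> by blast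
  moreover have "C \<subseteq> I \<longrightarrow> C \<noteq> {} \<longrightarrow> (\<forall>i\<in>C. \<rho> i \<in> R i) \<longrightarrow> \<not> xsum C \<rho> \<subseteq> I - C"
    using b by blast
  ultimately show False using PC by blast
qed

lemma of_nat_bit: "(of_nat n :: bit) = (if odd n then 1 else 0)"
  by (induction n) auto

lemma bit_add_self: "(a::bit) + a = 0"
  by (cases a) auto

lemma bit_add_eq0: "(a::bit) + b = 0 \<Longrightarrow> b = a"
  by (cases a; cases b) auto

lemma parity_sum:
  fixes w :: "'j \<Rightarrow> bit"
  assumes J: "finite J" and U: "finite U" and sub: "\<forall>i\<in>J. \<rho> i \<subseteq> U"
  shows "(\<Sum>i\<in>J. \<Sum>x\<in>\<rho> i. w x) = (\<Sum>x\<in>xsum J \<rho>. w x)"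
proof -
  have xs: "xsum J \<rho> \<subseteq> U"
  proof
    fix x assume "x \<in> xsum J \<rho>"
    then have "{i\<in>J. x \<in> \<rho> i} \<noteq> {}" unfolding xsum_def by (metis (no_types) card.empty mem_Collect_eq even_zero)
    then show "x \<in> U" using sub by auto
  qed
  have "(\<Sum>i\<in>J. \<Sum>x\<in>\<rho> i. w x) = (\<Sum>i\<in>J. \<Sum>x\<in>U. if x \<in> \<rho> i then w x else 0)"
  proof (rule sum.cong[OF refl])
    fix i assume "i \<in> J"
    then have "U \<inter> \<rho> i = \<rho> i" using sub by auto
    then show "(\<Sum>x\<in>\<rho> i. w x) = (\<Sum>x\<in>U. if x \<in> \<rho> i then w x else 0)"
      using sum.inter_restrict[OF U, of w "\<rho> i"] by simp
  qed
  also have "\<dots> = (\<Sum>x\<in>U. \<Sum>i\<in>J. if x \<in> \<rho> i then w x else 0)" by (rule sum.swap)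
  also have "\<dots> = (\<Sum>x\<in>U. if x \<in> xsum J \<rho> then w x else 0)"
  proof (rule sum.cong[OF refl])
    fix x assume "x \<in> U"
    have "(\<Sum>i\<in>J. if x \<in> \<rho> i then w x else 0) = (\<Sum>i\<in>J \<inter> {i. x \<in> \<rho> i}. w x)"
      using sum.inter_restrict[OF J, of "\<lambda>_. w x" "{i. x \<in> \<rho> i}"] by simp
    also have "\<dots> = of_nat (card (J \<inter> {i. x \<in> \<rho> i})) * w x"
      by (rule sum_constant)
    also have "of_nat (card (J \<inter> {i. x \<in> \<rho> i})) * w x = of_nat (card {i\<in>J. x \<in> \<rho> i}) * w x"
      by (simp add: Collect_conj_eq Int_commute)
    also have "\<dots> = (if x \<in> xsum J \<rho> then w x else 0)"
      unfolding xsum_def of_nat_bit by simp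
    finally show "(\<Sum>i\<in>J. if x \<in> \<rho> i then w x else 0) = (if x \<in> xsum J \<rho> then w x else 0)" .
  qed
  also have "\<dots> = (\<Sum>x\<in>U \<inter> xsum J \<rho>. w x)"
    using sum.inter_restrict[OF U, of w "xsum J \<rho>"] by simp
  also have "U \<inter> xsum J \<rho> = xsum J \<rho>" using xs by auto
  finally show ?thesis .
qed



locale binmat =
  fixes S :: "'a set" and indep :: "'a set \<Rightarrow> bool" and v :: "'a \<Rightarrow> nat \<Rightarrow> bit"
  assumes mat: "matroid S indep"
  and rep: "\<And>X. X \<subseteq> S \<Longrightarrow> indep X \<longleftrightarrow> \<not> (\<exists>Y\<subseteq>X. Y \<noteq> {} \<and> (\<forall>k. (\<Sum>y\<in>Y. v y k) = 0))"
begin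

lemma finS: "finite S" using mat unfolding matroid_def by blast
lemma indep_sub: "indep X \<Longrightarrow> X \<subseteq> S" using mat unfolding matroid_def by blast
lemma indep_mono: "indep X \<Longrightarrow> Y \<subseteq> X \<Longrightarrow> indep Y" using mat unfolding matroid_def by blast
lemma augment: "indep X \<Longrightarrow> indep Y \<Longrightarrow> card X < card Y \<Longrightarrow> \<exists>e\<in>Y - X. indep (insert e X)"
  using mat unfolding matroid_def by blast

lemma dep_of_zero:
  assumes "X \<subseteq> S" "Y \<subseteq> X" "Y \<noteq> {}" "\<forall>k. (\<Sum>y\<in>Y. v y k) = 0"
  shows "\<not> indep X"
  using rep[OF assms(1)] assms(2-4) by blast

lemma zero_of_dep:
  assumes "X \<subseteq> S" "\<not> indep X"
  obtains Y where "Y \<subseteq> X" "Y \<noteq> {}" "\<forall>k. (\<Sum>y\<in>Y. v y k) = 0"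
  using rep[OF assms(1)] assms(2) by blast

lemma zero_insert:
  assumes "finite Y" "x \<notin> Y" "\<forall>k. (\<Sum>y\<in>Y. v y k) = v x k"
  shows "\<forall>k. (\<Sum>y\<in>insert x Y. v y k) = 0"
proof
  fix k
  have "(\<Sum>y\<in>insert x Y. v y k) = v x k + (\<Sum>y\<in>Y. v y k)" using assms(1,2) by simp
  also have "\<dots> = v x k + v x k" using assms(3) by simp
  also have "\<dots> = 0" by (rule bit_add_self)
  finally show "(\<Sum>y\<in>insert x Y. v y k) = 0" .
qed

end

lemma part_facts:
  assumes "partition_on T Q"
  shows "\<Union>Q = T" and "\<And>A. A \<in> Q \<Longrightarrow> A \<noteq> {}"
    and "\<And>A A' x. A \<in> Q \<Longrightarrow> A' \<in> Q \<Longrightarrow> x \<in> A \<Longrightarrow> x \<in> A' \<Longrightarrow> A = A'"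
  using assms unfolding partition_on_def disjoint_def by blast+

lemma transv_inj:
  assumes "partition_on T Q" "\<forall>A\<in>Q. f A \<in> A"
  shows "inj_on f Q"
proof (rule inj_onI)
  fix A A' assume "A \<in> Q" "A' \<in> Q" "f A = f A'"
  then show "A = A'" using part_facts(3)[OF assms(1)] assms(2) by metis
qed


lemma fin_cards: "finite X \<Longrightarrow> finite {card Y | Y. Y \<subseteq> X \<and> P Y}"
  by (rule finite_subset[of _ "card ` Pow X"]) auto

context binmat begin

lemma key:
  assumes T: "T \<subseteq> S" and part: "partition_on T Q" and cardQ: "card Q = k" and k: "0 < k"
  and trans: "\<forall>f. (\<forall>A\<in>Q. f A \<in> A) \<longrightarrow> indep (f ` Q)"
  and rank: "\<forall>X\<subseteq>T. indep X \<longrightarrow> card X \<le> k"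
  shows "\<exists>A\<in>Q. \<forall>X\<subseteq>T - A. indep X \<longrightarrow> card X < k"
proof (rule ccontr)
  assume H: "\<not> (\<exists>A\<in>Q. \<forall>X\<subseteq>T - A. indep X \<longrightarrow> card X < k)"
  have finT: "finite T" using T finS finite_subset by blast
  have cov: "\<Union>Q = T" using part_facts(1)[OF part] .
  have nem: "\<And>A. A \<in> Q \<Longrightarrow> A \<noteq> {}" using part_facts(2)[OF part] .
  have dis: "\<And>A A' x. A \<in> Q \<Longrightarrow> A' \<in> Q \<Longrightarrow> x \<in> A \<Longrightarrow> x \<in> A' \<Longrightarrow> A = A'"
    using part_facts(3)[OF part] .
  have QT: "Q \<subseteq> Pow T" using cov by blast
  have finQ: "finite Q" using finite_subset[OF QT] finT by simp
  have neQ: "Q \<noteq> {}" using cardQ k by auto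
  have "\<forall>A\<in>Q. \<exists>x. x \<in> A" using nem by blast
  then obtain b where b: "\<forall>A\<in>Q. b A \<in> A" using bchoice[of Q "\<lambda>A x. x \<in> A"] by blast
  have injb: "inj_on b Q" by (rule transv_inj[OF part b])
  have bT: "b ` Q \<subseteq> T" using b cov by blast
  have indB: "indep (b ` Q)" using trans b by blast
  have cardB: "card (b ` Q) = k" using card_image[OF injb] cardQ by simp
  define R where "R = (\<lambda>A. {r. r \<subseteq> Q \<and> (\<exists>x\<in>A. \<forall>k. (\<Sum>A'\<in>r. v (b A') k) = v x k)})"
  have sumb: "(\<Sum>y\<in>b ` r. v y k) = (\<Sum>A'\<in>r. v (b A') k)" if "r \<subseteq> Q" for r k
  proof -
    have "inj_on b r" using injb that by (rule inj_on_subset)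
    then show ?thesis by (simp add: sum.reindex)
  qed
  show False
  proof (rule key_abstract[of Q R])
    show "finite Q" by (rule finQ)
    show "Q \<noteq> {}" by (rule neQ)
    show "\<forall>i\<in>Q. \<forall>r\<in>R i. r \<subseteq> Q \<and> i \<in> r"
    proof (intro ballI conjI)
      fix A r assume A: "A \<in> Q" and r: "r \<in> R A"
      then have rQ: "r \<subseteq> Q" and "\<exists>x\<in>A. \<forall>k. (\<Sum>A'\<in>r. v (b A') k) = v x k" unfolding R_def by auto
      then obtain x where x: "x \<in> A" "\<forall>k. (\<Sum>A'\<in>r. v (b A') k) = v x k" by blast
      show "r \<subseteq> Q" by (rule rQ)
      show "A \<in> r"
      proof (rule ccontr)
        assume nA: "A \<notin> r"
        define f where "f = b(A := x)"
        have f: "\<forall>A'\<in>Q. f A' \<in> A'" using b x unfolding f_def by auto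
        have fT: "f ` Q \<subseteq> T" using f cov by blast
        have ind: "indep (f ` Q)" using trans f by blast
        have sub: "insert x (b ` r) \<subseteq> f ` Q"
        proof
          fix y assume "y \<in> insert x (b ` r)"
          then show "y \<in> f ` Q"
          proof
            assume "y = x" then show ?thesis using A unfolding f_def by (auto intro!: image_eqI[of _ _ A])
          next
            assume "y \<in> b ` r"
            then obtain A' where "A' \<in> r" "y = b A'" by auto
            then show ?thesis using nA rQ unfolding f_def by (auto intro!: image_eqI[of _ _ A'])
          qed
        qed
        have xn: "x \<notin> b ` r"
        proof
          assume "x \<in> b ` r"
          then obtain A' where A': "A' \<in> r" "x = b A'" by auto
          then have A'Q: "A' \<in> Q" using rQ by auto
          then have "b A' \<in> A'" using b by auto
          then have "A = A'" using dis[OF A A'Q x(1)] A' by simp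
          then show False using nA A' by simp
        qed
        have finr: "finite (b ` r)" using finite_subset[OF rQ finQ] by simp
        have "\<forall>k. (\<Sum>y\<in>insert x (b ` r). v y k) = 0"
          by (rule zero_insert[OF finr xn]) (simp add: sumb[OF rQ] x(2))
        moreover have "f ` Q \<subseteq> S" using fT T by auto
        ultimately show False using dep_of_zero[of "f ` Q" "insert x (b ` r)"] sub ind by blast
      qed
    qed
    show "\<forall>J \<rho>. J \<subseteq> Q \<longrightarrow> J \<noteq> {} \<longrightarrow> (\<forall>i\<in>J. \<rho> i \<in> R i) \<longrightarrow> \<not> xsum J \<rho> \<subseteq> Q - J"
    proof (intro allI impI notI)
      fix J \<rho> assume J1: "J \<subseteq> Q" and J2: "J \<noteq> {}" and \<rho>: "\<forall>i\<in>J. \<rho> i \<in> R i" and xs: "xsum J \<rho> \<subseteq> Q - J"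
      have "\<forall>A\<in>J. \<exists>x. x \<in> A \<and> (\<forall>k. (\<Sum>A'\<in>\<rho> A. v (b A') k) = v x k)" using \<rho> unfolding R_def by blast
      then obtain x where x: "\<forall>A\<in>J. x A \<in> A \<and> (\<forall>k. (\<Sum>A'\<in>\<rho> A. v (b A') k) = v (x A) k)"
        using bchoice[of J "\<lambda>A y. y \<in> A \<and> (\<forall>k. (\<Sum>A'\<in>\<rho> A. v (b A') k) = v y k)"] by blast
      have \<rho>Q: "\<forall>A\<in>J. \<rho> A \<subseteq> Q" using \<rho> unfolding R_def by blast
      define f where "f = (\<lambda>A. if A \<in> J then x A else b A)"
      have f: "\<forall>A\<in>Q. f A \<in> A" using x b unfolding f_def by auto
      have fT: "f ` Q \<subseteq> T" using f cov by blast
      have ind: "indep (f ` Q)" using trans f by blast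
      let ?X = "xsum J \<rho>"
      let ?Z = "x ` J \<union> b ` ?X"
      have finJ: "finite J" using finite_subset[OF J1 finQ] .
      have XQ: "?X \<subseteq> Q" using xs by blast
      have finX: "finite ?X" using finite_subset[OF XQ finQ] .
      have sub: "?Z \<subseteq> f ` Q"
      proof
        fix y assume "y \<in> ?Z"
        then show "y \<in> f ` Q"
        proof
          assume "y \<in> x ` J"
          then obtain A where "A \<in> J" "y = x A" by auto
          then show ?thesis using J1 unfolding f_def by (auto intro!: image_eqI[of _ _ A])
        next
          assume "y \<in> b ` ?X"
          then obtain A where "A \<in> ?X" "y = b A" by auto
          then show ?thesis using xs unfolding f_def by (auto intro!: image_eqI[of _ _ A])
        qed
      qed
      have nz: "?Z \<noteq> {}" using J2 by auto
      have injx: "inj_on x J"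
      proof (rule inj_onI)
        fix A A' assume h: "A \<in> J" "A' \<in> J" "x A = x A'"
        have "x A \<in> A" "x A \<in> A'" using x h by auto
        then show "A = A'" using dis[of A A' "x A"] h J1 by blast
      qed
      have disj: "x ` J \<inter> b ` ?X = {}"
      proof (rule ccontr)
        assume "x ` J \<inter> b ` ?X \<noteq> {}"
        then obtain A A' where h: "A \<in> J" "A' \<in> ?X" "x A = b A'" by auto
        have "x A \<in> A" using x h by auto
        moreover have "x A \<in> A'" using b h XQ by auto
        ultimately have "A = A'" using dis[of A A' "x A"] h J1 XQ by blast
        then show False using h xs by auto
      qed
      have "\<forall>k. (\<Sum>y\<in>?Z. v y k) = 0"
      proof
        fix k
        have e1: "(\<Sum>y\<in>?Z. v y k) = (\<Sum>y\<in>x ` J. v y k) + (\<Sum>y\<in>b ` ?X. v y k)"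
          by (rule sum.union_disjoint) (use finJ finX disj in auto)
        have "(\<Sum>y\<in>x ` J. v y k) = (\<Sum>A\<in>J. v (x A) k)" using sum.reindex[OF injx] by simp
        also have "\<dots> = (\<Sum>A\<in>J. \<Sum>A'\<in>\<rho> A. v (b A') k)" using x by simp
        also have "\<dots> = (\<Sum>A'\<in>?X. v (b A') k)" by (rule parity_sum[OF finJ finQ \<rho>Q])
        finally have e2: "(\<Sum>y\<in>x ` J. v y k) = (\<Sum>A'\<in>?X. v (b A') k)" .
        have e3: "(\<Sum>y\<in>b ` ?X. v y k) = (\<Sum>A'\<in>?X. v (b A') k)" by (rule sumb[OF XQ])
        show "(\<Sum>y\<in>?Z. v y k) = 0" unfolding e1 e2 e3 by (rule bit_add_self)
      qed
      moreover have "f ` Q \<subseteq> S" using fT T by auto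
      ultimately show False using dep_of_zero[of "f ` Q" ?Z] sub nz ind by blast
    qed
    show "\<forall>j\<in>Q. \<exists>i\<in>Q. arc R i j"
    proof
      fix A assume A: "A \<in> Q"
      from H A obtain X where X: "X \<subseteq> T - A" "indep X" "\<not> card X < k" by blast
      let ?B' = "b ` (Q - {A})"
      have injb': "inj_on b (Q - {A})" using injb by (rule inj_on_subset) auto
      have cB': "card ?B' = k - 1" using card_image[OF injb'] cardQ A finQ by simp
      have indB': "indep ?B'" by (rule indep_mono[OF indB]) (rule image_mono, blast)
      have "k - 1 < card X" using X(3) k by arith
      then have "card ?B' < card X" by (simp only: cB')
      then obtain x where x: "x \<in> X - ?B'" "indep (insert x ?B')" using augment[OF indB' X(2)] by blast
      have xT: "x \<in> T" "x \<notin> A" using x X(1) by auto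
      then obtain A' where A': "A' \<in> Q" "x \<in> A'" using cov by blast
      have AA': "A' \<noteq> A" using A' xT by auto
      have xB: "x \<notin> b ` Q"
      proof
        assume "x \<in> b ` Q"
        then obtain A'' where h: "A'' \<in> Q" "x = b A''" by auto
        have "A'' \<noteq> A" using h b xT by auto
        then show False using x h by auto
      qed
      have insT: "insert x (b ` Q) \<subseteq> T" using xT bT by auto
      have finbQ: "finite (b ` Q)" using finQ by (rule finite_imageI)
      have cins: "card (insert x (b ` Q)) = Suc k" using card_insert_disjoint[OF finbQ xB] cardB by simp
      have "indep (insert x (b ` Q)) \<longrightarrow> card (insert x (b ` Q)) \<le> k" using rank insT by blast
      then have "\<not> indep (insert x (b ` Q))" using cins by simp
      moreover have "insert x (b ` Q) \<subseteq> S" using insT T by auto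
      ultimately obtain Z where Z: "Z \<subseteq> insert x (b ` Q)" "Z \<noteq> {}" "\<forall>k. (\<Sum>y\<in>Z. v y k) = 0"
        using zero_of_dep by blast
      have xZ: "x \<in> Z"
      proof (rule ccontr)
        assume "x \<notin> Z"
        then have "Z \<subseteq> b ` Q" using Z(1) by auto
        moreover have "b ` Q \<subseteq> S" using bT T by auto
        ultimately show False using dep_of_zero[of "b ` Q" Z] Z indB by blast
      qed
      define r where "r = {A''\<in>Q. b A'' \<in> Z}"
      have rQ: "r \<subseteq> Q" unfolding r_def by auto
      have br: "b ` r = Z - {x}" using Z(1) xB unfolding r_def by auto
      have finZ: "finite Z" using finite_subset[OF Z(1)] finQ by simp
      have rep_x: "\<forall>k. (\<Sum>A''\<in>r. v (b A'') k) = v x k"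
      proof
        fix k
        have "(\<Sum>y\<in>Z. v y k) = v x k + (\<Sum>y\<in>Z - {x}. v y k)" using finZ xZ by (simp add: sum.remove)
        then have "v x k + (\<Sum>y\<in>Z - {x}. v y k) = 0" using Z(3) by simp
        then have "(\<Sum>y\<in>Z - {x}. v y k) = v x k" by (rule bit_add_eq0)
        then show "(\<Sum>A''\<in>r. v (b A'') k) = v x k" using sumb[OF rQ] br by simp
      qed
      have rR: "r \<in> R A'" unfolding R_def using rQ rep_x A'(2) by blast
      show "\<exists>i\<in>Q. arc R i A"
      proof (cases "A \<in> r")
        case True then show ?thesis using A' AA' rR unfolding arc_def by blast
      next
        case False
        then have rQ': "r \<subseteq> Q - {A}" using rQ by auto
        have sub: "insert x (b ` r) \<subseteq> insert x ?B'" using rQ' by auto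
        have xn: "x \<notin> b ` r" using xB rQ by auto
        have finr: "finite (b ` r)" using finite_subset[OF rQ finQ] by simp
        have "\<forall>k. (\<Sum>y\<in>insert x (b ` r). v y k) = 0"
          by (rule zero_insert[OF finr xn]) (simp add: sumb[OF rQ] rep_x)
        moreover have "insert x ?B' \<subseteq> S" using insT T by auto
        ultimately show ?thesis using dep_of_zero[of "insert x ?B'" "insert x (b ` r)"] sub x(2) by blast
      qed
    qed
  qed
qed


lemma cut:
  assumes T: "T \<subseteq> S" and part: "partition_on T Q" and cardQ: "card Q = k"
  and trans: "\<forall>f. (\<forall>A\<in>Q. f A \<in> A) \<longrightarrow> indep (f ` Q)"
  and rank: "\<forall>X\<subseteq>T. indep X \<longrightarrow> card X \<le> k"
  and A: "A \<in> Q" and small: "\<forall>X\<subseteq>T - A. indep X \<longrightarrow> card X < k"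
  shows "is_cut indep T A"
proof -
  have finT: "finite T" using T finS finite_subset by blast
  have cov: "\<Union>Q = T" using part_facts(1)[OF part] .
  have nem: "\<And>A. A \<in> Q \<Longrightarrow> A \<noteq> {}" using part_facts(2)[OF part] .
  have dis: "\<And>A A' x. A \<in> Q \<Longrightarrow> A' \<in> Q \<Longrightarrow> x \<in> A \<Longrightarrow> x \<in> A' \<Longrightarrow> A = A'"
    using part_facts(3)[OF part] .
  have "\<forall>A\<in>Q. \<exists>x. x \<in> A" using nem by blast
  then obtain b where b: "\<forall>A\<in>Q. b A \<in> A" using bchoice[of Q "\<lambda>A x. x \<in> A"] by blast
  have tr1: "indep (f ` Q)" if f: "\<forall>A\<in>Q. f A \<in> A" for f using trans f by blast
  have tr2: "f ` Q \<subseteq> T" if f: "\<forall>A\<in>Q. f A \<in> A" for f using f cov by blast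
  have tr3: "card (f ` Q) = k" if f: "\<forall>A\<in>Q. f A \<in> A" for f
    using card_image[OF transv_inj[OF part f]] cardQ by simp
  have basis_card: "k \<le> card B" if B: "basis_of indep T B" for B
  proof (rule ccontr)
    assume "\<not> k \<le> card B"
    then have lt: "card B < card (b ` Q)" using tr3[OF b] by simp
    have iB: "indep B" and BT: "B \<subseteq> T" using B unfolding basis_of_def by auto
    obtain e where e: "e \<in> b ` Q - B" "indep (insert e B)" using augment[OF iB tr1[OF b] lt] by blast
    have "insert e B \<subseteq> T" using e tr2[OF b] BT by auto
    then have "insert e B = B" using B e unfolding basis_of_def by blast
    then show False using e by auto
  qed
  have c1: "A \<subseteq> T" using A cov by blast
  have c2: "\<forall>B. basis_of indep T B \<longrightarrow> A \<inter> B \<noteq> {}"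
  proof (intro allI impI notI)
    fix B assume B: "basis_of indep T B" and AB: "A \<inter> B = {}"
    then have "B \<subseteq> T - A" "indep B" unfolding basis_of_def by auto
    then have "card B < k" using small by blast
    with basis_card[OF B] show False by simp
  qed
  have c3: "\<forall>D'. D' \<subset> A \<longrightarrow> (\<exists>B. basis_of indep T B \<and> D' \<inter> B = {})"
  proof (intro allI impI)
    fix D' assume D': "D' \<subset> A"
    then obtain a where a: "a \<in> A" "a \<notin> D'" by blast
    define f where "f = b(A := a)"
    have f: "\<forall>A'\<in>Q. f A' \<in> A'" using b a unfolding f_def by auto
    have bas: "basis_of indep T (f ` Q)"
      unfolding basis_of_def
    proof (intro conjI allI impI)
      show "f ` Q \<subseteq> T" by (rule tr2[OF f])
      show "indep (f ` Q)" by (rule tr1[OF f])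
      fix B' assume h: "f ` Q \<subseteq> B' \<and> B' \<subseteq> T \<and> indep B'"
      then have le: "card B' \<le> k" using rank by blast
      have finB': "finite B'" using h finT finite_subset by blast
      have "card (f ` Q) \<le> card B'" using card_mono[OF finB'] h by blast
      then have "card (f ` Q) = card B'" using le tr3[OF f] by simp
      then show "B' = f ` Q" using card_subset_eq[OF finB'] h by metis
    qed
    have "D' \<inter> f ` Q = {}"
    proof (rule ccontr)
      assume "D' \<inter> f ` Q \<noteq> {}"
      then obtain A' where A': "A' \<in> Q" "f A' \<in> D'" by auto
      then have "f A' \<in> A" using D' by auto
      moreover have "f A' \<in> A'" using f A' by auto
      ultimately have "A' = A" using dis[OF A'(1) A] by blast
      then show False using A' a unfolding f_def by simp
    qed
    then show "\<exists>B. basis_of indep T B \<and> D' \<inter> B = {}" using bas by blast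
  qed
  show ?thesis unfolding is_cut_def using c1 c2 c3 by blast
qed

lemma std_ind:
  "\<forall>T Q. T \<subseteq> S \<longrightarrow> partition_on T Q \<longrightarrow> card Q = k \<longrightarrow>
     (\<forall>f. (\<forall>A\<in>Q. f A \<in> A) \<longrightarrow> indep (f ` Q)) \<longrightarrow> (\<forall>X\<subseteq>T. indep X \<longrightarrow> card X \<le> k) \<longrightarrow>
     (\<exists>Sc. bij_betw Sc {1..k} Q \<and> (\<forall>i\<in>{1..k}. is_cut indep (\<Union>j\<in>{1..i}. Sc j) (Sc i)))"
proof (induction k)
  case 0
  show ?case
  proof (intro allI impI)
    fix T Q assume T: "T \<subseteq> S" and part: "partition_on T Q" and c: "card Q = 0"
    have finT: "finite T" using T finS finite_subset by blast
    have QT: "Q \<subseteq> Pow T" using part_facts(1)[OF part] by blast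
    have finQ: "finite Q" using finite_subset[OF QT] finT by simp
    then have Q0: "Q = {}" using c by simp
    have e: "{1..(0::nat)} = {}" by auto
    let ?E = "(\<lambda>_. {}) :: nat \<Rightarrow> 'a set"
    have bj: "bij_betw ?E {1..(0::nat)} Q" unfolding e Q0 by (simp add: bij_betw_def)
    have "bij_betw ?E {1..(0::nat)} Q \<and> (\<forall>i\<in>{1..(0::nat)}. is_cut indep (\<Union>j\<in>{1..i}. ?E j) (?E i))"
      using bj e by simp
    then show "\<exists>Sc. bij_betw Sc {1..(0::nat)} Q \<and> (\<forall>i\<in>{1..(0::nat)}. is_cut indep (\<Union>j\<in>{1..i}. Sc j) (Sc i))"
      by (rule exI[of _ ?E])
  qed
next
  case (Suc n)
  show ?case
  proof (intro allI impI)
    fix T Q assume T: "T \<subseteq> S" and part: "partition_on T Q" and c: "card Q = Suc n"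
      and trans: "\<forall>f. (\<forall>A\<in>Q. f A \<in> A) \<longrightarrow> indep (f ` Q)"
      and rank: "\<forall>X\<subseteq>T. indep X \<longrightarrow> card X \<le> Suc n"
    have finT: "finite T" using T finS finite_subset by blast
    have cov: "\<Union>Q = T" using part_facts(1)[OF part] .
    have nem: "\<And>A. A \<in> Q \<Longrightarrow> A \<noteq> {}" using part_facts(2)[OF part] .
    have dis: "\<And>A A' x. A \<in> Q \<Longrightarrow> A' \<in> Q \<Longrightarrow> x \<in> A \<Longrightarrow> x \<in> A' \<Longrightarrow> A = A'"
      using part_facts(3)[OF part] .
    have QT: "Q \<subseteq> Pow T" using cov by blast
    have finQ: "finite Q" using finite_subset[OF QT] finT by simp
    obtain A where A: "A \<in> Q" and small: "\<forall>X\<subseteq>T - A. indep X \<longrightarrow> card X < Suc n"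
      using key[OF T part c _ trans rank] by auto
    have cutA: "is_cut indep T A" by (rule cut[OF T part c trans rank A small])
    have T': "T - A \<subseteq> S" using T by auto
    have cov': "\<Union>(Q - {A}) = T - A"
    proof
      show "\<Union>(Q - {A}) \<subseteq> T - A"
      proof
        fix x assume "x \<in> \<Union>(Q - {A})"
        then obtain A' where A': "A' \<in> Q" "A' \<noteq> A" "x \<in> A'" by auto
        have "x \<notin> A" using dis[OF A'(1) A A'(3)] A'(2) by blast
        then show "x \<in> T - A" using A' cov by blast
      qed
      show "T - A \<subseteq> \<Union>(Q - {A})" using cov by blast
    qed
    have part': "partition_on (T - A) (Q - {A})"
      unfolding partition_on_def
    proof (intro conjI)
      show "\<Union>(Q - {A}) = T - A" by (rule cov')
      show "disjoint (Q - {A})" using part unfolding partition_on_def disjoint_def by blast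
      show "{} \<notin> Q - {A}" using nem by blast
    qed
    have c': "card (Q - {A}) = n" using c A finQ by simp
    have trans': "\<forall>f. (\<forall>A'\<in>Q - {A}. f A' \<in> A') \<longrightarrow> indep (f ` (Q - {A}))"
    proof (intro allI impI)
      fix f assume f: "\<forall>A'\<in>Q - {A}. f A' \<in> A'"
      obtain a where a: "a \<in> A" using nem A by blast
      let ?g = "f(A := a)"
      have g: "\<forall>A'\<in>Q. ?g A' \<in> A'" using f a by auto
      have ig: "indep (?g ` Q)" using trans g by blast
      have "f ` (Q - {A}) \<subseteq> ?g ` Q" by auto
      then show "indep (f ` (Q - {A}))" using indep_mono[OF ig] by blast
    qed
    have rank': "\<forall>X\<subseteq>T - A. indep X \<longrightarrow> card X \<le> n"
    proof (intro allI impI)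
      fix X assume "X \<subseteq> T - A" "indep X"
      then have "card X < Suc n" using small by blast
      then show "card X \<le> n" by simp
    qed
    have "\<exists>Sc. bij_betw Sc {1..n} (Q - {A}) \<and> (\<forall>i\<in>{1..n}. is_cut indep (\<Union>j\<in>{1..i}. Sc j) (Sc i))"
      using Suc.IH T' part' c' trans' rank' by blast
    then obtain Sc where Sc1: "bij_betw Sc {1..n} (Q - {A})"
      and Sc2: "\<forall>i\<in>{1..n}. is_cut indep (\<Union>j\<in>{1..i}. Sc j) (Sc i)" by blast
    define Sc' where "Sc' = Sc(Suc n := A)"
    have b1: "bij_betw Sc' {1..n} (Q - {A})"
      using Sc1 by (rule bij_betw_cong[THEN iffD1, rotated]) (auto simp: Sc'_def)
    have b2: "bij_betw Sc' {Suc n} {A}" by (simp add: Sc'_def bij_betw_def)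
    have "bij_betw Sc' ({1..n} \<union> {Suc n}) ((Q - {A}) \<union> {A})"
      by (rule bij_betw_combine[OF b1 b2]) auto
    moreover have "{1..n} \<union> {Suc n} = {1..Suc n}" by auto
    moreover have "(Q - {A}) \<union> {A} = Q" using A by auto
    ultimately have bij: "bij_betw Sc' {1..Suc n} Q" by simp
    have cuts: "\<forall>i\<in>{1..Suc n}. is_cut indep (\<Union>j\<in>{1..i}. Sc' j) (Sc' i)"
    proof
      fix i assume i: "i \<in> {1..Suc n}"
      show "is_cut indep (\<Union>j\<in>{1..i}. Sc' j) (Sc' i)"
      proof (cases "i = Suc n")
        case True
        have u1: "(\<Union>j\<in>{1..i}. Sc' j) = (\<Union>j\<in>{1..n}. Sc' j) \<union> Sc' (Suc n)"
          using True by (auto simp: atLeastAtMostSuc_conv)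
        have u2: "Sc' ` {1..n} = Q - {A}" using b1 by (simp add: bij_betw_def)
        have u3: "Sc' (Suc n) = A" by (simp add: Sc'_def)
        have "(\<Union>j\<in>{1..i}. Sc' j) = \<Union>(Q - {A}) \<union> A" unfolding u1 u2 u3 ..
        then have "(\<Union>j\<in>{1..i}. Sc' j) = T" using cov' A cov by auto
        then show ?thesis using True cutA by (simp add: Sc'_def)
      next
        case False
        then have i': "i \<in> {1..n}" using i by auto
        have "(\<Union>j\<in>{1..i}. Sc' j) = (\<Union>j\<in>{1..i}. Sc j)" using i' by (auto simp: Sc'_def)
        moreover have "Sc' i = Sc i" using i' by (simp add: Sc'_def)
        ultimately show ?thesis using Sc2 i' by simp
      qed
    qed
    show "\<exists>Sc. bij_betw Sc {1..Suc n} Q \<and> (\<forall>i\<in>{1..Suc n}. is_cut indep (\<Union>j\<in>{1..i}. Sc j) (Sc i))"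
      using bij cuts by blast
  qed
qed

lemma rainbow_trans:
  assumes part: "partition_on S P" and rb: "rainbow_circuit_free S indep P"
  shows "\<forall>f. (\<forall>A\<in>P. f A \<in> A) \<longrightarrow> indep (f ` P)"
proof (intro allI impI)
  fix f assume f: "\<forall>A\<in>P. f A \<in> A"
  show "indep (f ` P)"
  proof (rule ccontr)
    assume nd: "\<not> indep (f ` P)"
    let ?F = "f ` P"
    have FS: "?F \<subseteq> S" using f part_facts(1)[OF part] by blast
    have finF: "finite ?F" using FS finS finite_subset by blast
    let ?D = "\<lambda>C. C \<subseteq> ?F \<and> \<not> indep C"
    have "?D ?F" using nd by blast
    then obtain C where C: "?D C" and minC: "\<forall>C'. ?D C' \<longrightarrow> card C \<le> card C'"
      using ex_has_least_nat[of ?D ?F card] by blast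
    have finC: "finite C" using C finF finite_subset by blast
    have circ: "circuit S indep C" unfolding circuit_def
    proof (intro conjI allI impI)
      show "C \<subseteq> S" using C FS by blast
      show "\<not> indep C" using C by blast
      fix D assume D: "D \<subset> C"
      have lt: "card D < card C" using psubset_card_mono[OF finC D] .
      show "indep D"
      proof (rule ccontr)
        assume "\<not> indep D"
        then have "?D D" using D C by blast
        then have "card C \<le> card D" using minC by blast
        then show False using lt by simp
      qed
    qed
    have "\<forall>A\<in>P. card (C \<inter> A) \<le> 1"
    proof
      fix A assume A: "A \<in> P"
      have "C \<inter> A \<subseteq> {f A}"
      proof
        fix y assume y: "y \<in> C \<inter> A"
        then obtain A' where A': "A' \<in> P" "y = f A'" using C by auto
        have "y \<in> A'" using f A' by auto
        then have "A' = A" using part_facts(3)[OF part A'(1) A] y by blast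
        then show "y \<in> {f A}" using A' by simp
      qed
      then have "card (C \<inter> A) \<le> card {f A}" by (rule card_mono[rotated]) simp
      then show "card (C \<inter> A) \<le> 1" by simp
    qed
    then show False using rb circ unfolding rainbow_circuit_free_def by blast
  qed
qed

end

theorem corollary3:
  fixes S :: "'a set" and indep :: "'a set \<Rightarrow> bool" and P :: "'a set set" and r :: nat
  assumes "matroid S indep"
    and "loopless S indep"
    and "binary S indep"
    and "r = mrank indep S"
    and "partition_on S P"
    and "card P = r"
    and "rainbow_circuit_free S indep P"
  shows "standard_coloring indep r P \<and>
         (0 < r \<longrightarrow> (\<exists>A\<in>P. \<forall>e\<in>A. \<forall>f\<in>A. e \<noteq> f \<longrightarrow> parallel indep e f))"
proof -
  obtain v :: "'a \<Rightarrow> nat \<Rightarrow> bit" where v: "\<forall>X\<subseteq>S. indep X \<longleftrightarrow> \<not> (\<exists>Y\<subseteq>X. Y \<noteq> {} \<and> (\<forall>k. (\<Sum>y\<in>Y. v y k) = 0))"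
    using assms(3) unfolding binary_def by blast
  interpret binmat S indep v
  proof
    show "matroid S indep" by (rule assms(1))
    fix X assume "X \<subseteq> S"
    then show "indep X \<longleftrightarrow> \<not> (\<exists>Y\<subseteq>X. Y \<noteq> {} \<and> (\<forall>k. (\<Sum>y\<in>Y. v y k) = 0))" using v by blast
  qed
  have trans: "\<forall>f. (\<forall>A\<in>P. f A \<in> A) \<longrightarrow> indep (f ` P)" by (rule rainbow_trans[OF assms(5) assms(7)])
  have rank: "\<forall>X\<subseteq>S. indep X \<longrightarrow> card X \<le> r"
  proof (intro allI impI)
    fix X assume X: "X \<subseteq> S" "indep X"
    have fin: "finite {card Y | Y. Y \<subseteq> S \<and> indep Y}" using fin_cards[OF finS] .
    have "card X \<in> {card Y | Y. Y \<subseteq> S \<and> indep Y}" using X by blast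
    then have "card X \<le> Max {card Y | Y. Y \<subseteq> S \<and> indep Y}" using fin by (rule Max_ge[rotated])
    then show "card X \<le> r" using assms(4) unfolding mrank_def by simp
  qed
  have "\<exists>Sc. bij_betw Sc {1..r} P \<and> (\<forall>i\<in>{1..r}. is_cut indep (\<Union>j\<in>{1..i}. Sc j) (Sc i))"
    using std_ind[of r] assms(5,6) trans rank by blast
  then obtain Sc where Sc1: "bij_betw Sc {1..r} P"
    and Sc2: "\<forall>i\<in>{1..r}. is_cut indep (\<Union>j\<in>{1..i}. Sc j) (Sc i)" by blast
  have part1: "standard_coloring indep r P" unfolding standard_coloring_def using Sc1 Sc2 by blast
  have part2: "0 < r \<longrightarrow> (\<exists>A\<in>P. \<forall>e\<in>A. \<forall>f\<in>A. e \<noteq> f \<longrightarrow> parallel indep e f)"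
  proof
    assume r: "0 < r"
    let ?A = "Sc 1"
    have one: "1 \<in> {1..r}" using r by simp
    have A: "?A \<in> P" using bij_betwE[OF Sc1] one by blast
    have "is_cut indep (\<Union>j\<in>{1..1}. Sc j) (Sc 1)" using Sc2 one by blast
    then have cut1: "is_cut indep ?A ?A" by simp
    have nem: "\<And>A. A \<in> P \<Longrightarrow> A \<noteq> {}" using part_facts(2)[OF assms(5)] .
    have "\<forall>A\<in>P. \<exists>x. x \<in> A" using nem by blast
    then obtain b where b: "\<forall>A\<in>P. b A \<in> A" using bchoice[of P "\<lambda>A x. x \<in> A"] by blast
    have sing: "indep {x}" if x: "x \<in> ?A" for x
    proof -
      let ?g = "b(?A := x)"
      have g: "\<forall>A'\<in>P. ?g A' \<in> A'" using b x by auto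
      have ig: "indep (?g ` P)" using trans g by blast
      have "{x} \<subseteq> ?g ` P" using A by (auto intro!: image_eqI[of _ _ ?A])
      then show ?thesis by (rule indep_mono[OF ig])
    qed
    show "\<exists>A\<in>P. \<forall>e\<in>A. \<forall>f\<in>A. e \<noteq> f \<longrightarrow> parallel indep e f"
    proof (intro bexI[OF _ A] ballI impI)
      fix e f assume e: "e \<in> ?A" and f: "f \<in> ?A" and ef: "e \<noteq> f"
      have dep: "\<not> indep {e, f}"
      proof
        assume ind: "indep {e, f}"
        have "?A - {f} \<subset> ?A" using f by auto
        then obtain B where B: "basis_of indep ?A B" "(?A - {f}) \<inter> B = {}"
          using cut1 unfolding is_cut_def by blast
        have BA: "B \<subseteq> ?A" using B(1) unfolding basis_of_def by blast
        then have Bf: "B \<subseteq> {f}" using B(2) by blast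
        then have "B \<subseteq> {e, f}" by blast
        moreover have "{e, f} \<subseteq> ?A" using e f by blast
        ultimately have "{e, f} = B" using B(1) ind unfolding basis_of_def by blast
        then show False using Bf ef by blast
      qed
      have "mrank indep {e, f} = 1" unfolding mrank_def
      proof (rule Max_eqI)
        show "finite {card Y |Y. Y \<subseteq> {e, f} \<and> indep Y}" by (rule fin_cards) simp
        fix y assume "y \<in> {card Y |Y. Y \<subseteq> {e, f} \<and> indep Y}"
        then obtain Y where Y: "Y \<subseteq> {e, f}" "indep Y" "y = card Y" by blast
        then have "Y \<noteq> {e, f}" using dep by blast
        then have "Y \<subseteq> {e} \<or> Y \<subseteq> {f}" using Y(1) by blast
        then have "card Y \<le> 1"
        proof
          assume "Y \<subseteq> {e}" then show ?thesis using card_mono[of "{e}" Y] by simp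
        next
          assume "Y \<subseteq> {f}" then show ?thesis using card_mono[of "{f}" Y] by simp
        qed
        then show "y \<le> 1" using Y(3) by simp
      next
        have "{e} \<subseteq> {e, f} \<and> indep {e}" using sing[OF e] by blast
        then show "1 \<in> {card Y |Y. Y \<subseteq> {e, f} \<and> indep Y}" by force
      qed
      then show "parallel indep e f" unfolding parallel_def using sing e f by blast
    qed
  qed
  show ?thesis using part1 part2 by blast
qed


end
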